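(* Let $L>0$ and let $a\in C^1_{\mathrm{pw}}[-L,L]$ with $a\ge a_{\min}>0$, and let $-L=z_0<\dots<z_N=L$ be a partition such that $a\in C^1[z_{j-1},z_j]$ and $a'$ is either $>0$ throughout or $\le0$ throughout on each $\tau_j=(z_{j-1},z_j)$. Define $\tilde a$ on each $\tau_j$ by $\tilde a=a$ if $a'>0$ on $\tau_j$, and $\tilde a\equiv a^+(z_{j-1})$ if $a'\le0$ on $\tau_j$ (right-continuous at $z_j$, $j<N$, left-continuous at $z_N$). Then $\mathrm{Var}(\tilde a)\le\mathrm{Var}(a)$. The analogous statement holds for a function $c$ of the same type.
   Context: $C^1_{\mathrm{pw}}[-L,L]$ is the set of $g:[-L,L]\to\mathbb{R}$ for which there is a finite partition $-L=z_0<\dots<z_N=L$ with $g\in C^1[z_{j-1},z_j]$ for each $j$ and, on each $(z_{j-1},z_j)$, either $g'>0$ throughout or $g'\le0$ throughout. For $g$ and such a partition: $g^\pm(z_j)$ are the right/left one-sided limits, $[g]_{z_j}=g^-(z_j)-g^+(z_j)$ for $1\le j\le N-1$, $\partial_{\mathrm{pw}}g=g'$ on each $(z_{j-1},z_j)$, and $\mathrm{Var}(g)=\sum_{\ell=1}^{N-1}|[g]_{z_\ell}|+\int_{-L}^L|\partial_{\mathrm{pw}}g(s)|\,ds$ (here computed with respect to the partition above). *)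

theory Defs
  imports "HOL-Analysis.Analysis"
begin

definition is_partition :: "real \<Rightarrow> (nat \<Rightarrow> real) \<Rightarrow> nat \<Rightarrow> bool" where
  "is_partition L z N \<longleftrightarrow> 1 \<le> N \<and> z 0 = -L \<and> z N = L \<and> (\<forall>j<N. z j < z (Suc j))"

definition C1_piece :: "(real \<Rightarrow> real) \<Rightarrow> real \<Rightarrow> real \<Rightarrow> bool" where
  "C1_piece g x y \<longleftrightarrow> (\<exists>h h'. (\<forall>s\<in>{x..y}. (h has_real_derivative h' s) (at s within {x..y}))
       \<and> continuous_on {x..y} h' \<and> (\<forall>s\<in>{x<..<y}. g s = h s))"

definition incr_piece :: "(real \<Rightarrow> real) \<Rightarrow> real \<Rightarrow> real \<Rightarrow> bool" where
  "incr_piece g x y \<longleftrightarrow> (\<forall>s\<in>{x<..<y}. deriv g s > 0)"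

definition nonincr_piece :: "(real \<Rightarrow> real) \<Rightarrow> real \<Rightarrow> real \<Rightarrow> bool" where
  "nonincr_piece g x y \<longleftrightarrow> (\<forall>s\<in>{x<..<y}. deriv g s \<le> 0)"

definition C1pw_wrt :: "(nat \<Rightarrow> real) \<Rightarrow> nat \<Rightarrow> (real \<Rightarrow> real) \<Rightarrow> bool" where
  "C1pw_wrt z N g \<longleftrightarrow> (\<forall>j\<in>{1..N}. C1_piece g (z (j-1)) (z j)
       \<and> (incr_piece g (z (j-1)) (z j) \<or> nonincr_piece g (z (j-1)) (z j)))"

text \<open>Piecewise derivative (set to 0 at the partition points, a null set).\<close>
definition pw_deriv :: "(nat \<Rightarrow> real) \<Rightarrow> nat \<Rightarrow> (real \<Rightarrow> real) \<Rightarrow> real \<Rightarrow> real" where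
  "pw_deriv z N g s = (if \<exists>j\<in>{1..N}. s \<in> {z (j-1)<..<z j} then deriv g s else 0)"

definition Var_pw :: "(nat \<Rightarrow> real) \<Rightarrow> nat \<Rightarrow> (real \<Rightarrow> real) \<Rightarrow> real" where
  "Var_pw z N g = (\<Sum>l\<in>{1..N-1}. \<bar>Lim (at_left (z l)) g - Lim (at_right (z l)) g\<bar>)
      + integral {z 0..z N} (\<lambda>s. \<bar>pw_deriv z N g s\<bar>)"

definition atilde :: "(nat \<Rightarrow> real) \<Rightarrow> nat \<Rightarrow> (real \<Rightarrow> real) \<Rightarrow> real \<Rightarrow> real" where
  "atilde z N a s =
    (if s = z N then
       (if incr_piece a (z (N-1)) (z N) then Lim (at_left (z N)) a
        else Lim (at_right (z (N-1))) a)
     else if z 0 \<le> s \<and> s < z N then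
       (let j = (THE j. 1 \<le> j \<and> j \<le> N \<and> z (j-1) \<le> s \<and> s < z j) in
         if s = z (j-1) then Lim (at_right (z (j-1))) a
         else if incr_piece a (z (j-1)) (z j) then a s
         else Lim (at_right (z (j-1))) a)
     else 0)"

end

theory Submission
  imports Defs
begin

lemma z_mono:
  assumes "\<forall>j<N. z j < z (Suc j)" "i < k" "k \<le> N"
  shows "z i < (z k :: real)"
  using assms(2,3)
proof (induction k)
  case 0 then show ?case by simp
next
  case (Suc k)
  have "z k < z (Suc k)" using assms(1) Suc.prems by auto
  then show ?case using Suc by (cases "i = k") auto
qed

lemma z_mono_le:
  assumes "\<forall>j<N. z j < z (Suc j)" "i \<le> k" "k \<le> N"
  shows "z i \<le> (z k :: real)"
  using z_mono[OF assms(1)] assms(2,3) by (cases "i = k") (auto intro: less_imp_le)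

lemma piece_facts:
  fixes G G' g :: "real \<Rightarrow> real"
  assumes xy: "x < y" and D: "\<forall>s\<in>{x..y}. (G has_real_derivative G' s) (at s within {x..y})"
    and eq: "\<forall>s\<in>{x<..<y}. g s = G s"
  shows "Lim (at_right x) g = G x" "Lim (at_left y) g = G y"
    "\<forall>s\<in>{x<..<y}. deriv g s = G' s"
proof -
  have cont: "continuous_on {x..y} G"
    using D continuous_on_eq_continuous_within DERIV_continuous by blast
  have ev1: "eventually (\<lambda>s. G s = g s) (at_right x)"
    using eventually_at_right_real[OF xy] by eventually_elim (use eq in auto)
  have ev2: "eventually (\<lambda>s. G s = g s) (at_left y)"
    using eventually_at_left_real[OF xy] by eventually_elim (use eq in auto)
  have "(g \<longlongrightarrow> G x) (at_right x)"
    using Lim_transform_eventually[OF continuous_on_Icc_at_rightD[OF cont xy] ev1] .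
  then show "Lim (at_right x) g = G x" by (intro tendsto_Lim) auto
  have "(g \<longlongrightarrow> G y) (at_left y)"
    using Lim_transform_eventually[OF continuous_on_Icc_at_leftD[OF cont xy] ev2] .
  then show "Lim (at_left y) g = G y" by (intro tendsto_Lim) auto
  show "\<forall>s\<in>{x<..<y}. deriv g s = G' s"
  proof
    fix s assume s: "s \<in> {x<..<y}"
    have d0: "(G has_real_derivative G' s) (at s within {x..y})" using D s by auto
    have "at s within {x..y} = at s" using s by (intro at_within_Icc_at) auto
    then have "(G has_real_derivative G' s) (at s)" using d0 by simp
    then have "(g has_real_derivative G' s) (at s)"
      by (rule has_field_derivative_transform_within_open[of _ _ _ "{x<..<y}"]) (use s eq in auto)
    then show "deriv g s = G' s" by (rule DERIV_imp_deriv)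
  qed
qed

lemma piece_int:
  fixes G G' :: "real \<Rightarrow> real"
  assumes xy: "x < y" and D: "\<forall>s\<in>{x..y}. (G has_real_derivative G' s) (at s within {x..y})"
    and C: "continuous_on {x..y} G'"
  shows "((\<lambda>s. \<bar>G' s\<bar>) has_integral integral {x..y} (\<lambda>s. \<bar>G' s\<bar>)) {x..y}"
    "\<bar>G y - G x\<bar> \<le> integral {x..y} (\<lambda>s. \<bar>G' s\<bar>)"
    "0 \<le> integral {x..y} (\<lambda>s. \<bar>G' s\<bar>)"
proof -
  have ci: "continuous_on {x..y} (\<lambda>s. \<bar>G' s\<bar>)" using C by (rule continuous_on_rabs)
  then have ii: "(\<lambda>s. \<bar>G' s\<bar>) integrable_on {x..y}" by (rule integrable_continuous_interval)
  then show "((\<lambda>s. \<bar>G' s\<bar>) has_integral integral {x..y} (\<lambda>s. \<bar>G' s\<bar>)) {x..y}"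
    by (rule integrable_integral)
  have F: "(G' has_integral (G y - G x)) {x..y}"
  proof (rule fundamental_theorem_of_calculus)
    show "x \<le> y" using xy by simp
    fix s assume "s \<in> {x..y}"
    then have "(G has_real_derivative G' s) (at s within {x..y})" using D by blast
    then show "(G has_vector_derivative G' s) (at s within {x..y})"
      by (simp add: has_real_derivative_iff_has_vector_derivative)
  qed
  have F2: "integral {x..y} G' = G y - G x" using F by (rule integral_unique)
  have "norm (integral {x..y} G') \<le> integral {x..y} (\<lambda>s. \<bar>G' s\<bar>)"
  proof (rule integral_norm_bound_integral)
    show "G' integrable_on {x..y}" using F by (rule has_integral_integrable)
    show "(\<lambda>s. \<bar>G' s\<bar>) integrable_on {x..y}" by (rule ii)
    fix s show "norm (G' s) \<le> \<bar>G' s\<bar>" by simp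
  qed
  then show "\<bar>G y - G x\<bar> \<le> integral {x..y} (\<lambda>s. \<bar>G' s\<bar>)"
    unfolding F2 by simp
  show "0 \<le> integral {x..y} (\<lambda>s. \<bar>G' s\<bar>)"
    by (rule integral_nonneg[OF ii]) simp
qed

lemma var_formula:
  fixes g :: "real \<Rightarrow> real" and G G' :: "nat \<Rightarrow> real \<Rightarrow> real"
  assumes zinc: "\<forall>j<N. z j < z (Suc j)"
    and D: "\<forall>j\<in>{1..N}. \<forall>s\<in>{z(j-1)..z j}. (G j has_real_derivative G' j s) (at s within {z(j-1)..z j})"
    and C: "\<forall>j\<in>{1..N}. continuous_on {z(j-1)..z j} (G' j)"
    and E: "\<forall>j\<in>{1..N}. \<forall>s\<in>{z(j-1)<..<z j}. g s = G j s"
  shows "Var_pw z N g = (\<Sum>l\<in>{1..N-1}. \<bar>G l (z l) - G (Suc l) (z l)\<bar>)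
           + (\<Sum>j\<in>{1..N}. integral {z(j-1)..z j} (\<lambda>s. \<bar>G' j s\<bar>))"
proof -
  have lt: "z (j-1) < z j" if "j \<in> {1..N}" for j
    using z_mono[OF zinc, of "j-1" j] that by auto
  have PF: "Lim (at_right (z(j-1))) g = G j (z(j-1))" "Lim (at_left (z j)) g = G j (z j)"
     "\<forall>s\<in>{z(j-1)<..<z j}. deriv g s = G' j s" if "j \<in> {1..N}" for j
  proof -
    have d: "\<forall>s\<in>{z(j-1)..z j}. (G j has_real_derivative G' j s) (at s within {z(j-1)..z j})"
      using D that by blast
    have e: "\<forall>s\<in>{z(j-1)<..<z j}. g s = G j s" using E that by blast
    show "Lim (at_right (z(j-1))) g = G j (z(j-1))" "Lim (at_left (z j)) g = G j (z j)"
     "\<forall>s\<in>{z(j-1)<..<z j}. deriv g s = G' j s"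
      using piece_facts[OF lt[OF that] d e] by auto
  qed
  have jumps: "(\<Sum>l\<in>{1..N-1}. \<bar>Lim (at_left (z l)) g - Lim (at_right (z l)) g\<bar>)
       = (\<Sum>l\<in>{1..N-1}. \<bar>G l (z l) - G (Suc l) (z l)\<bar>)"
  proof (rule sum.cong)
    fix l assume l: "l \<in> {1..N-1}"
    then have "l \<in> {1..N}" "Suc l \<in> {1..N}" by auto
    from PF(2)[OF this(1)] PF(1)[OF this(2)]
    show "\<bar>Lim (at_left (z l)) g - Lim (at_right (z l)) g\<bar> = \<bar>G l (z l) - G (Suc l) (z l)\<bar>"
      by simp
  qed simp
  have piece: "((\<lambda>s. \<bar>pw_deriv z N g s\<bar>) has_integral integral {z(j-1)..z j} (\<lambda>s. \<bar>G' j s\<bar>))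
      {z(j-1)..z j}" if j: "j \<in> {1..N}" for j
  proof (rule has_integral_spike_finite[of "{z(j-1), z j}"])
    show "((\<lambda>s. \<bar>G' j s\<bar>) has_integral integral {z(j-1)..z j} (\<lambda>s. \<bar>G' j s\<bar>)) {z(j-1)..z j}"
    proof (rule piece_int(1)[OF lt[OF j]])
      show "\<forall>s\<in>{z(j-1)..z j}. (G j has_real_derivative G' j s) (at s within {z(j-1)..z j})"
        using D j by blast
      show "continuous_on {z(j-1)..z j} (G' j)" using C j by blast
    qed
    fix s assume s: "s \<in> {z (j - 1)..z j} - {z (j - 1), z j}"
    then have s': "s \<in> {z (j - 1)<..<z j}" by auto
    then have "pw_deriv z N g s = deriv g s" unfolding pw_deriv_def using j by auto
    then show "\<bar>pw_deriv z N g s\<bar> = \<bar>G' j s\<bar>" using PF(3)[OF j] s' by auto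
  qed simp
  have tot: "n \<le> N \<Longrightarrow> ((\<lambda>s. \<bar>pw_deriv z N g s\<bar>) has_integral
      (\<Sum>j\<in>{1..n}. integral {z(j-1)..z j} (\<lambda>s. \<bar>G' j s\<bar>))) {z 0..z n}" for n
  proof (induction n)
    case 0 then show ?case using has_integral_null[of "z 0" "z 0"] by simp
  next
    case (Suc n)
    have "Suc n \<in> {1..N}" using Suc.prems by auto
    from piece[OF this] have p: "((\<lambda>s. \<bar>pw_deriv z N g s\<bar>) has_integral integral {z n..z (Suc n)} (\<lambda>s. \<bar>G' (Suc n) s\<bar>))
      {z n..z (Suc n)}" by simp
    have "z 0 \<le> z n" using z_mono_le[OF zinc, of 0 n] Suc.prems by auto
    moreover have "z n \<le> z (Suc n)" using zinc Suc.prems by (auto intro: less_imp_le)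
    ultimately have "((\<lambda>s. \<bar>pw_deriv z N g s\<bar>) has_integral
      (\<Sum>j\<in>{1..n}. integral {z(j-1)..z j} (\<lambda>s. \<bar>G' j s\<bar>)) + integral {z n..z (Suc n)} (\<lambda>s. \<bar>G' (Suc n) s\<bar>)) {z 0..z (Suc n)}"
      using Suc.prems by (intro has_integral_combine[OF _ _ Suc.IH p]) auto
    then show ?case by (simp add: sum.cl_ivl_Suc)
  qed
  have I: "integral {z 0..z N} (\<lambda>s. \<bar>pw_deriv z N g s\<bar>) = (\<Sum>j\<in>{1..N}. integral {z(j-1)..z j} (\<lambda>s. \<bar>G' j s\<bar>))"
    by (rule integral_unique[OF tot]) simp
  show ?thesis unfolding Var_pw_def jumps I by (rule refl)
qed

theorem proposition5p6:
  fixes L amin :: real and z :: "nat \<Rightarrow> real" and N :: nat and a :: "real \<Rightarrow> real"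
  assumes "L > 0"
    and "amin > 0"
    and "\<forall>s\<in>{-L..L}. a s \<ge> amin"
    and "is_partition L z N"
    and "C1pw_wrt z N a"
  shows "Var_pw z N (atilde z N a) \<le> Var_pw z N a"
proof -
  have zinc: "\<forall>j<N. z j < z (Suc j)" and N1: "1 \<le> N"
    using assms(4) unfolding is_partition_def by auto
  have lt: "z (j-1) < z j" if "j \<in> {1..N}" for j
    using z_mono[OF zinc, of "j-1" j] that by auto
  have "\<forall>j\<in>{1..N}. \<exists>p. (\<forall>s\<in>{z(j-1)..z j}. (fst p has_real_derivative snd p s) (at s within {z(j-1)..z j}))
       \<and> continuous_on {z(j-1)..z j} (snd p) \<and> (\<forall>s\<in>{z(j-1)<..<z j}. a s = fst p s)"
  proof
    fix j assume "j \<in> {1..N}"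
    then have "C1_piece a (z (j-1)) (z j)" using assms(5) unfolding C1pw_wrt_def by blast
    then obtain h h' where "\<forall>s\<in>{z(j-1)..z j}. (h has_real_derivative h' s) (at s within {z(j-1)..z j})"
       "continuous_on {z(j-1)..z j} h'" "\<forall>s\<in>{z(j-1)<..<z j}. a s = h s"
      unfolding C1_piece_def by blast
    then show "\<exists>p. (\<forall>s\<in>{z(j-1)..z j}. (fst p has_real_derivative snd p s) (at s within {z(j-1)..z j}))
       \<and> continuous_on {z(j-1)..z j} (snd p) \<and> (\<forall>s\<in>{z(j-1)<..<z j}. a s = fst p s)"
      by (intro exI[of _ "(h, h')"]) simp
  qed
  then obtain P where P: "\<forall>j\<in>{1..N}. (\<forall>s\<in>{z(j-1)..z j}. (fst (P j) has_real_derivative snd (P j) s) (at s within {z(j-1)..z j}))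
       \<and> continuous_on {z(j-1)..z j} (snd (P j)) \<and> (\<forall>s\<in>{z(j-1)<..<z j}. a s = fst (P j) s)"
    by (rule bchoice[THEN exE]) blast
  define H where "H j = fst (P j)" for j
  define H' where "H' j = snd (P j)" for j
  have HD: "\<forall>j\<in>{1..N}. \<forall>s\<in>{z(j-1)..z j}. (H j has_real_derivative H' j s) (at s within {z(j-1)..z j})"
    using P unfolding H_def H'_def by blast
  have HC: "\<forall>j\<in>{1..N}. continuous_on {z(j-1)..z j} (H' j)"
    using P unfolding H_def H'_def by blast
  have HE: "\<forall>j\<in>{1..N}. \<forall>s\<in>{z(j-1)<..<z j}. a s = H j s"
    using P unfolding H_def H'_def by blast
  define I where "I j = integral {z(j-1)..z j} (\<lambda>s. \<bar>H' j s\<bar>)" for j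
  define inc where "inc j = incr_piece a (z(j-1)) (z j)" for j
  have Hlim: "Lim (at_right (z(j-1))) a = H j (z(j-1))" if j: "j \<in> {1..N}" for j
  proof -
    have d: "\<forall>s\<in>{z(j-1)..z j}. (H j has_real_derivative H' j s) (at s within {z(j-1)..z j})"
      using HD j by blast
    have e: "\<forall>s\<in>{z(j-1)<..<z j}. a s = H j s" using HE j by blast
    show ?thesis using piece_facts(1)[OF lt[OF j] d e] .
  qed
  have PI: "\<bar>H j (z j) - H j (z(j-1))\<bar> \<le> I j" "0 \<le> I j" if j: "j \<in> {1..N}" for j
  proof -
    have d: "\<forall>s\<in>{z(j-1)..z j}. (H j has_real_derivative H' j s) (at s within {z(j-1)..z j})"
      using HD j by blast
    have c: "continuous_on {z(j-1)..z j} (H' j)" using HC j by blast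
    show "\<bar>H j (z j) - H j (z(j-1))\<bar> \<le> I j" "0 \<le> I j"
      using piece_int(2,3)[OF lt[OF j] d c] unfolding I_def by auto
  qed
  have Va: "Var_pw z N a = (\<Sum>l\<in>{1..N-1}. \<bar>H l (z l) - H (Suc l) (z l)\<bar>) + (\<Sum>j\<in>{1..N}. I j)"
    unfolding I_def by (rule var_formula[OF zinc HD HC HE])
  define Gt where "Gt j = (if inc j then H j else (\<lambda>_. H j (z(j-1))))" for j
  define Gt' where "Gt' j = (if inc j then H' j else (\<lambda>_. 0))" for j
  have GD: "\<forall>j\<in>{1..N}. \<forall>s\<in>{z(j-1)..z j}. (Gt j has_real_derivative Gt' j s) (at s within {z(j-1)..z j})"
    using HD unfolding Gt_def Gt'_def by (auto intro: DERIV_const)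
  have GC: "\<forall>j\<in>{1..N}. continuous_on {z(j-1)..z j} (Gt' j)"
    using HC unfolding Gt'_def by auto
  have THEj: "(THE j. 1 \<le> j \<and> j \<le> N \<and> z (j-1) \<le> s \<and> s < z j) = j"
    if j: "j \<in> {1..N}" and s: "s \<in> {z(j-1)<..<z j}" for j s
  proof (rule the_equality)
    show "1 \<le> j \<and> j \<le> N \<and> z (j-1) \<le> s \<and> s < z j" using j s by auto
    fix k assume k: "1 \<le> k \<and> k \<le> N \<and> z (k-1) \<le> s \<and> s < z k"
    show "k = j"
    proof (rule ccontr)
      assume "k \<noteq> j"
      then consider "k < j" | "j < k" by linarith
      then show False
      proof cases
        case 1
        then have "z k \<le> z (j-1)" using z_mono_le[OF zinc, of k "j-1"] j by auto
        then show False using k s by auto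
      next
        case 2
        then have "z j \<le> z (k-1)" using z_mono_le[OF zinc, of j "k-1"] k by auto
        then show False using k s by auto
      qed
    qed
  qed
  have GE: "\<forall>j\<in>{1..N}. \<forall>s\<in>{z(j-1)<..<z j}. atilde z N a s = Gt j s"
  proof (intro ballI)
    fix j s assume j: "j \<in> {1..N}" and s: "s \<in> {z(j-1)<..<z j}"
    have zjN: "z j \<le> z N" using z_mono_le[OF zinc, of j N] j by auto
    have z0: "z 0 \<le> z (j-1)" using z_mono_le[OF zinc, of 0 "j-1"] j by auto
    have ne: "s \<noteq> z N" "z 0 \<le> s \<and> s < z N" "s \<noteq> z (j-1)" using s zjN z0 by auto
    have "atilde z N a s = (if inc j then a s else Lim (at_right (z (j-1))) a)"
      unfolding atilde_def Let_def THEj[OF j s] inc_def using ne by simp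
    also have "\<dots> = Gt j s" unfolding Gt_def using HE j s Hlim[OF j] by auto
    finally show "atilde z N a s = Gt j s" .
  qed
  have Vt: "Var_pw z N (atilde z N a) = (\<Sum>l\<in>{1..N-1}. \<bar>Gt l (z l) - Gt (Suc l) (z l)\<bar>)
           + (\<Sum>j\<in>{1..N}. integral {z(j-1)..z j} (\<lambda>s. \<bar>Gt' j s\<bar>))"
    by (rule var_formula[OF zinc GD GC GE])
  have int_eq: "integral {z(j-1)..z j} (\<lambda>s. \<bar>Gt' j s\<bar>) = (if inc j then I j else 0)" for j
    unfolding Gt'_def I_def by simp
  have Gs: "Gt (Suc l) (z l) = H (Suc l) (z l)" for l unfolding Gt_def by simp
  have jl: "\<bar>Gt l (z l) - Gt (Suc l) (z l)\<bar> \<le> \<bar>H l (z l) - H (Suc l) (z l)\<bar> + (if inc l then 0 else I l)"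
    if l: "l \<in> {1..N-1}" for l
  proof -
    have lN: "l \<in> {1..N}" using l by auto
    show ?thesis
    proof (cases "inc l")
      case True then show ?thesis unfolding Gs unfolding Gt_def by simp
    next
      case False
      have "\<bar>Gt l (z l) - Gt (Suc l) (z l)\<bar> = \<bar>H l (z(l-1)) - H (Suc l) (z l)\<bar>"
        unfolding Gs unfolding Gt_def using False by simp
      also have "\<dots> \<le> \<bar>H l (z l) - H (Suc l) (z l)\<bar> + \<bar>H l (z l) - H l (z(l-1))\<bar>" by linarith
      also have "\<dots> \<le> \<bar>H l (z l) - H (Suc l) (z l)\<bar> + I l" using PI(1)[OF lN] by linarith
      finally show ?thesis using False by simp
    qed
  qed
  have S1: "(\<Sum>l\<in>{1..N-1}. \<bar>Gt l (z l) - Gt (Suc l) (z l)\<bar>) \<le>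
     (\<Sum>l\<in>{1..N-1}. \<bar>H l (z l) - H (Suc l) (z l)\<bar>) + (\<Sum>l\<in>{1..N-1}. (if inc l then 0 else I l))"
    unfolding sum.distrib[symmetric] by (rule sum_mono) (rule jl)
  have S2: "(\<Sum>l\<in>{1..N-1}. (if inc l then 0 else I l)) \<le> (\<Sum>l\<in>{1..N}. (if inc l then 0 else I l))"
    by (rule sum_mono2) (use PI(2) in auto)
  have S3: "(\<Sum>j\<in>{1..N}. (if inc j then I j else 0)) + (\<Sum>l\<in>{1..N}. (if inc l then 0 else I l))
      = (\<Sum>j\<in>{1..N}. I j)"
    unfolding sum.distrib[symmetric] by (rule sum.cong) auto
  show ?thesis unfolding Va Vt int_eq using S1 S2 S3 by linarith
qed

end
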